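(* Let $k\ge0$ and let $\alpha\in[0,1]^m$ be a common zero of all the polynomials $Q_\kappa=\sum_{|\mu|=k+1}A_k[\kappa,\mu]P_\mu$, $|\kappa|=k$. Then $v:=\sum_{|\nu|\le k}d_{2\nu}P_\nu(\alpha)P_\nu$ is an eigenvector of $T_k$ with eigenvalue $\sigma(\alpha)$.
   Context: Setting: $1\le m\le n/2$; $\mathcal G_{m,n}$ Grassmannian of $m$-subspaces of $\mathbb R^n$; $y_i(p,q)=\cos^2\theta_i$ for principal angles. Partitions $\kappa=(\kappa_1\ge\dots\ge\kappa_m\ge0)$, $|\kappa|=\sum\kappa_i$. $V_n^\lambda$ irreducible $O(n,\mathbb R)$-representation indexed by $\lambda$; $L^2(\mathcal G_{m,n})\cong\bigoplus_\kappa V_n^{2\kappa}$, $d_{2\kappa}=\dim V_n^{2\kappa}$. $P_\kappa$ is the zonal polynomial (symmetric in $y_1,\dots,y_m$, degree $|\kappa|$, $P_\kappa(1,\dots,1)=1$, $p\mapsto P_\kappa(y(p,q))$ in the component $\cong V_n^{2\kappa}$). $S_k$ is the space of symmetric polynomials of degree $\le k$, with orthogonal basis $(P_\kappa)_{|\kappa|\le k}$ for $[f,g]=\int_{[0,1]^m}f\bar g\,d\mu$, $d\mu=c\prod_{i<j}|y_i-y_j|\prod_iy_i^{-1/2}(1-y_i)^{n/2-m-1/2}dy_i$, $[P_\kappa,P_\kappa]=d_{2\kappa}^{-1}$. $\sigma=y_1+\dots+y_m$; $T_k(P)=\mathrm{pr}_{S_k}(\sigma P)$ on $S_k$. $A_k$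 is the matrix with $\sigma\mathbb P_k=A_k\mathbb P_{k+1}+B_k\mathbb P_k+C_k\mathbb P_{k-1}$, $\mathbb P_k$ the vector of the $P_\kappa$ with $|\kappa|=k$. *)

theory Defs
  imports "HOL-Analysis.Analysis"
begin

text \<open>Points of [0,1]^m are represented as y :: nat => real, only y 0, ..., y (m-1) matter.
  Polynomials in m variables are represented by the polynomial functions they define.\<close>

definition mono_eval :: "nat \<Rightarrow> (nat \<Rightarrow> nat) \<Rightarrow> (nat \<Rightarrow> real) \<Rightarrow> real" where
  "mono_eval m e y = (\<Prod>i<m. y i ^ e i)"

definition is_poly :: "nat \<Rightarrow> nat \<Rightarrow> ((nat \<Rightarrow> real) \<Rightarrow> real) \<Rightarrow> bool" where
  "is_poly m k f \<longleftrightarrow> (\<exists>E c. finite E \<and>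
      (\<forall>e\<in>E. (\<forall>i\<ge>m. e i = 0) \<and> (\<Sum>i<m. e i) \<le> k) \<and>
      f = (\<lambda>y. \<Sum>e\<in>E. c e * mono_eval m e y))"

definition symmetric_fn :: "nat \<Rightarrow> ((nat \<Rightarrow> real) \<Rightarrow> real) \<Rightarrow> bool" where
  "symmetric_fn m f \<longleftrightarrow> (\<forall>\<pi>. \<pi> permutes {..<m} \<longrightarrow> (\<forall>y. f (y \<circ> \<pi>) = f y))"

definition Sk :: "nat \<Rightarrow> nat \<Rightarrow> ((nat \<Rightarrow> real) \<Rightarrow> real) set" where
  "Sk m k = {f. is_poly m k f \<and> symmetric_fn m f}"

definition is_partition :: "nat \<Rightarrow> (nat \<Rightarrow> nat) \<Rightarrow> bool" where
  "is_partition m \<kappa> \<longleftrightarrow> (\<forall>i j. i \<le> j \<longrightarrow> \<kappa> j \<le> \<kappa> i) \<and> (\<forall>i\<ge>m. \<kappa> i = 0)"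

definition psize :: "nat \<Rightarrow> (nat \<Rightarrow> nat) \<Rightarrow> nat" where
  "psize m \<kappa> = (\<Sum>i<m. \<kappa> i)"

definition parts_eq :: "nat \<Rightarrow> nat \<Rightarrow> (nat \<Rightarrow> nat) set" where
  "parts_eq m k = {\<kappa>. is_partition m \<kappa> \<and> psize m \<kappa> = k}"

definition parts_le :: "nat \<Rightarrow> nat \<Rightarrow> (nat \<Rightarrow> nat) set" where
  "parts_le m k = {\<kappa>. is_partition m \<kappa> \<and> psize m \<kappa> \<le> k}"

definition sigma :: "nat \<Rightarrow> (nat \<Rightarrow> real) \<Rightarrow> real" where
  "sigma m y = (\<Sum>i<m. y i)"

definition cube :: "nat \<Rightarrow> (nat \<Rightarrow> real) set" where
  "cube m = {y. \<forall>i<m. 0 \<le> y i \<and> y i \<le> 1}"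

definition weight :: "nat \<Rightarrow> nat \<Rightarrow> (nat \<Rightarrow> real) \<Rightarrow> real" where
  "weight m n y = (\<Prod>i<m. \<Prod>j<m. if i < j then \<bar>y i - y j\<bar> else 1) *
     (\<Prod>i<m. y i powr (-1/2) * (1 - y i) powr (real n / 2 - real m - 1/2))"

definition Lm :: "nat \<Rightarrow> (nat \<Rightarrow> real) measure" where
  "Lm m = PiM {..<m} (\<lambda>_. lborel)"

text \<open>The constant c normalises mu to a probability measure (so that [P_0,P_0] = 1 = 1/d_0).\<close>
definition norm_const :: "nat \<Rightarrow> nat \<Rightarrow> real" where
  "norm_const m n = 1 / (\<integral>y. indicator (cube m) y * weight m n y \<partial>Lm m)"

definition ip :: "nat \<Rightarrow> nat \<Rightarrow> ((nat \<Rightarrow> real) \<Rightarrow> real) \<Rightarrow> ((nat \<Rightarrow> real) \<Rightarrow> real) \<Rightarrow> real" where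
  "ip m n f g = norm_const m n *
     (\<integral>y. indicator (cube m) y * weight m n y * f y * g y \<partial>Lm m)"

text \<open>T_k(f) = orthogonal projection onto S_k of sigma * f.\<close>
definition Tk :: "nat \<Rightarrow> nat \<Rightarrow> nat \<Rightarrow> ((nat \<Rightarrow> real) \<Rightarrow> real) \<Rightarrow> ((nat \<Rightarrow> real) \<Rightarrow> real)" where
  "Tk m n k f = (THE h. h \<in> Sk m k \<and>
      (\<forall>q\<in>Sk m k. ip m n (\<lambda>y. sigma m y * f y - h y) q = 0))"

definition zonal_family :: "nat \<Rightarrow> nat \<Rightarrow> ((nat \<Rightarrow> nat) \<Rightarrow> (nat \<Rightarrow> real) \<Rightarrow> real) \<Rightarrow> bool" where
  "zonal_family m n P \<longleftrightarrow>
     (\<forall>\<kappa>. is_partition m \<kappa> \<longrightarrow> P \<kappa> \<in> Sk m (psize m \<kappa>) \<and> P \<kappa> (\<lambda>_. 1) = 1) \<and>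
     (\<forall>\<kappa> \<rho>. is_partition m \<kappa> \<longrightarrow> is_partition m \<rho> \<longrightarrow> \<kappa> \<noteq> \<rho> \<longrightarrow> ip m n (P \<kappa>) (P \<rho>) = 0) \<and>
     (\<forall>j. \<forall>f\<in>Sk m j. \<exists>c. f = (\<lambda>y. \<Sum>\<kappa>\<in>parts_le m j. c \<kappa> * P \<kappa> y))"

text \<open>d_{2 kappa}, via [P_kappa, P_kappa] = 1 / d_{2 kappa}.\<close>
definition dz :: "nat \<Rightarrow> nat \<Rightarrow> ((nat \<Rightarrow> nat) \<Rightarrow> (nat \<Rightarrow> real) \<Rightarrow> real) \<Rightarrow> (nat \<Rightarrow> nat) \<Rightarrow> real" where
  "dz m n P \<kappa> = 1 / ip m n (P \<kappa>) (P \<kappa>)"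

end

theory Submission
  imports Defs "HOL-Computational_Algebra.Polynomial"
begin


definition psi :: "real \<Rightarrow> real" where
  "psi t = indicator {0<..1} t * t powr (-1/2) + indicator {0<..1} (1 - t) * (1 - t) powr (-1/2)"

lemma psi_nonneg: "0 \<le> psi t"
  unfolding psi_def by (auto simp: indicator_def)

lemma phi_le_psi:
  fixes t a :: real
  assumes t: "0 \<le> t" "t \<le> 1" and a: "-1/2 \<le> a"
  shows "t powr (-1/2) * (1 - t) powr a \<le> psi t"
proof (cases "t = 0 \<or> t = 1")
  case True
  then show ?thesis using psi_nonneg[of t] by auto
next
  case False
  then have t0: "0 < t" "t < 1" using t by auto
  have "(1 - t) powr a \<le> (1 - t) powr (-1/2)"
    using t0 a by (intro powr_mono') auto
  then have "t powr (-1/2) * (1 - t) powr a \<le> t powr (-1/2) * (1 - t) powr (-1/2)"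
    by (intro mult_left_mono) auto
  also have "\<dots> \<le> t powr (-1/2) + (1 - t) powr (-1/2)"
  proof -
    define s where "s = sqrt t"
    define r where "r = sqrt (1 - t)"
    have s0: "s > 0" and r0: "r > 0" using t0 by (auto simp: s_def r_def)
    have sr: "s^2 + r^2 = 1" using t0 by (simp add: s_def r_def)
    have e1: "t powr (-1/2) = 1 / s" using t0
      by (simp add: s_def powr_minus_divide powr_half_sqrt)
    have e2: "(1 - t) powr (-1/2) = 1 / r" using t0
      by (simp add: r_def powr_minus_divide powr_half_sqrt)
    have "1 \<le> r + s"
    proof -
      have "(r + s)^2 = (s^2 + r^2) + 2 * (r * s)" by (simp add: power2_eq_square algebra_simps)
      then have "1 \<le> (r + s)^2" using sr mult_pos_pos[OF r0 s0] by linarith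
      then show ?thesis using s0 r0
        using power2_le_imp_le[of 1 "r+s"] by simp
    qed
    then have "1 / s * (1 / r) \<le> 1 / s + 1 / r" using s0 r0
      by (simp add: field_simps)
    then show ?thesis unfolding e1 e2 by simp
  qed
  also have "\<dots> = psi t" using t0 by (simp add: psi_def indicator_def)
  finally show ?thesis .
qed

interpretation lbprod: product_sigma_finite "\<lambda>_::nat. lborel" by standard

lemma int_psi: "integrable lborel psi"
proof -
  have i0: "integrable lborel (\<lambda>t::real. indicator {0<..1} t * t powr (-1/2))"
  proof -
    have "integrable lebesgue (\<lambda>x. indicat_real {0<..1} x *\<^sub>R (x::real) powr (-1/2))"
      by (intro nonnegative_absolutely_integrable_1 [unfolded set_integrable_def] integrable_on_powr_from_0') auto
    then show ?thesis
      by (subst integrable_completion[symmetric]) auto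
  qed
  have i1: "integrable lborel (\<lambda>t::real. indicator {0<..1} (1 - t) * (1 - t) powr (-1/2))"
    using lborel_integrable_real_affine_iff[of "-1" "\<lambda>t::real. indicator {0<..1} t * t powr (-1/2)" 1] i0
    by simp
  show ?thesis unfolding psi_def using i0 i1 by (rule Bochner_Integration.integrable_add)
qed

lemma weight_nonneg: "0 \<le> weight m n y"
  unfolding weight_def by (intro mult_nonneg_nonneg prod_nonneg) auto

lemma weight_le:
  assumes "2 * m \<le> n" "y \<in> cube m"
  shows "weight m n y \<le> (\<Prod>i<m. psi (y i))"
proof -
  have a: "-1/2 \<le> real n / 2 - real m - 1/2" using assms(1) by linarith
  have y: "\<And>i. i < m \<Longrightarrow> 0 \<le> y i \<and> y i \<le> 1" using assms(2) by (auto simp: cube_def)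
  have v: "(\<Prod>i<m. \<Prod>j<m. if i < j then \<bar>y i - y j\<bar> else 1) \<le> 1"
  proof -
    have h: "0 \<le> (if i < j then \<bar>y i - y j\<bar> else 1) \<and> (if i < j then \<bar>y i - y j\<bar> else 1) \<le> 1"
      if "i < m" "j < m" for i j
      using y[of i] y[of j] that by auto
    have h2: "0 \<le> (\<Prod>j<m. if i < j then \<bar>y i - y j\<bar> else 1) \<and> (\<Prod>j<m. if i < j then \<bar>y i - y j\<bar> else 1) \<le> 1"
      if "i < m" for i
      using h that by (intro conjI prod_nonneg prod_le_1) auto
    show ?thesis using h2 by (intro prod_le_1) auto
  qed
  have "weight m n y \<le> 1 * (\<Prod>i<m. y i powr (-1/2) * (1 - y i) powr (real n / 2 - real m - 1/2))"
    unfolding weight_def using v by (intro mult_right_mono prod_nonneg) auto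
  also have "\<dots> \<le> (\<Prod>i<m. psi (y i))"
    using phi_le_psi[OF _ _ a] y by (auto intro!: prod_mono)
  finally show ?thesis .
qed

lemma meas_cube: "(\<lambda>y. indicator (cube m) y :: real) \<in> borel_measurable (Lm m)"
proof -
  have "(\<lambda>y. indicator (cube m) y :: real) = (\<lambda>y. if (\<forall>i\<in>{..<m}. 0 \<le> y i \<and> y i \<le> 1) then 1 else 0)"
    by (auto simp: cube_def indicator_def fun_eq_iff)
  also have "\<dots> \<in> borel_measurable (Lm m)" unfolding Lm_def by measurable
  finally show ?thesis .
qed

lemma meas_weight: "weight m n \<in> borel_measurable (Lm m)"
  unfolding Lm_def weight_def by measurable

lemma int_weight:
  assumes "2 * m \<le> n" "g \<in> borel_measurable (Lm m)" "\<And>y. y \<in> cube m \<Longrightarrow> \<bar>g y\<bar> \<le> K"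
  shows "integrable (Lm m) (\<lambda>y. indicator (cube m) y * weight m n y * g y)"
proof (rule Bochner_Integration.integrable_bound[OF _ _ AE_I2])
  show "integrable (Lm m) (\<lambda>y. K * (\<Prod>i\<in>{..<m}. psi (y i)))"
    unfolding Lm_def
    by (intro Bochner_Integration.integrable_mult_right lbprod.product_integrable_prod int_psi) auto
  show "(\<lambda>y. indicator (cube m) y * weight m n y * g y) \<in> borel_measurable (Lm m)"
    using meas_cube meas_weight assms(2) by measurable
  fix y
  show "norm (indicator (cube m) y * weight m n y * g y) \<le> norm (K * (\<Prod>i\<in>{..<m}. psi (y i)))"
  proof (cases "y \<in> cube m")
    case True
    have K: "0 \<le> K" using assms(3)[OF True] by linarith
    have "\<bar>weight m n y * g y\<bar> = weight m n y * \<bar>g y\<bar>" using weight_nonneg by (simp add: abs_mult)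
    also have "\<dots> \<le> (\<Prod>i<m. psi (y i)) * K"
      using weight_le[OF assms(1) True] assms(3)[OF True] weight_nonneg
      by (intro mult_mono prod_nonneg psi_nonneg) auto
    finally show ?thesis using True K psi_nonneg
      by (simp add: abs_mult prod_nonneg mult.commute)
  qed (simp)
qed



definition adm :: "nat \<Rightarrow> nat \<Rightarrow> (nat \<Rightarrow> nat) \<Rightarrow> bool" where
  "adm m k e \<longleftrightarrow> (\<forall>i\<ge>m. e i = 0) \<and> (\<Sum>i<m. e i) \<le> k"

lemma is_poly_gen:
  assumes "finite I" "\<And>i. i \<in> I \<Longrightarrow> adm m k (ex i)"
  shows "is_poly m k (\<lambda>y. \<Sum>i\<in>I. c i * mono_eval m (ex i) y)"
  unfolding is_poly_def
proof (intro exI conjI)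
  show "finite (ex ` I)" using assms(1) by simp
  show "\<forall>e\<in>ex ` I. (\<forall>i\<ge>m. e i = 0) \<and> (\<Sum>i<m. e i) \<le> k" using assms(2) by (auto simp: adm_def)
  show "(\<lambda>y. \<Sum>i\<in>I. c i * mono_eval m (ex i) y) =
    (\<lambda>y. \<Sum>e\<in>ex ` I. (\<Sum>i\<in>{x\<in>I. ex x = e}. c i) * mono_eval m e y)"
  proof
    fix y
    have "(\<Sum>i\<in>I. c i * mono_eval m (ex i) y) =
       (\<Sum>e\<in>ex ` I. \<Sum>i\<in>{x\<in>I. ex x = e}. c i * mono_eval m (ex i) y)"
      using assms(1) by (rule sum.image_gen)
    also have "\<dots> = (\<Sum>e\<in>ex ` I. (\<Sum>i\<in>{x\<in>I. ex x = e}. c i) * mono_eval m e y)"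
      by (intro sum.cong refl) (auto simp: sum_distrib_right)
    finally show "(\<Sum>i\<in>I. c i * mono_eval m (ex i) y) =
       (\<Sum>e\<in>ex ` I. (\<Sum>i\<in>{x\<in>I. ex x = e}. c i) * mono_eval m e y)" .
  qed
qed

lemma is_poly_ex:
  assumes "is_poly m k f"
  shows "\<exists>E c. finite E \<and> (\<forall>e\<in>E. adm m k e) \<and> f = (\<lambda>y. \<Sum>e\<in>E. c e * mono_eval m e y)"
  using assms unfolding is_poly_def adm_def by blast

lemma is_poly_zero: "is_poly m k (\<lambda>_. 0)"
  using is_poly_gen[of "{}" m k] by simp

lemma is_poly_const: "is_poly m k (\<lambda>_. c)"
proof -
  have "is_poly m k (\<lambda>y. \<Sum>i\<in>{()}. c * mono_eval m (\<lambda>_. 0) y)"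
    by (rule is_poly_gen) (auto simp: adm_def)
  then show ?thesis by (simp add: mono_eval_def)
qed

lemma is_poly_add:
  assumes "is_poly m k f" "is_poly m k g"
  shows "is_poly m k (\<lambda>y. f y + g y)"
proof -
  obtain E1 c1 where 1: "finite E1" "\<forall>e\<in>E1. adm m k e" "f = (\<lambda>y. \<Sum>e\<in>E1. c1 e * mono_eval m e y)"
    using is_poly_ex[OF assms(1)] by blast
  obtain E2 c2 where 2: "finite E2" "\<forall>e\<in>E2. adm m k e" "g = (\<lambda>y. \<Sum>e\<in>E2. c2 e * mono_eval m e y)"
    using is_poly_ex[OF assms(2)] by blast
  have "is_poly m k (\<lambda>y. \<Sum>i\<in>E1 <+> E2. case_sum c1 c2 i * mono_eval m (case_sum id id i) y)"
    using 1 2 by (intro is_poly_gen) auto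
  then show ?thesis using 1 2 by (simp add: sum.Plus o_def)
qed

lemma is_poly_scale:
  assumes "is_poly m k f"
  shows "is_poly m k (\<lambda>y. a * f y)"
proof -
  obtain E c where 1: "finite E" "\<forall>e\<in>E. adm m k e" "f = (\<lambda>y. \<Sum>e\<in>E. c e * mono_eval m e y)"
    using is_poly_ex[OF assms(1)] by blast
  have "is_poly m k (\<lambda>y. \<Sum>e\<in>E. (a * c e) * mono_eval m e y)"
    using 1 by (intro is_poly_gen) auto
  then show ?thesis using 1 by (simp add: sum_distrib_left mult.assoc)
qed

lemma is_poly_sum:
  assumes "finite N" "\<And>x. x \<in> N \<Longrightarrow> is_poly m k (F x)"
  shows "is_poly m k (\<lambda>y. \<Sum>x\<in>N. F x y)"
  using assms
proof (induction N rule: finite_induct)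
  case empty
  then show ?case using is_poly_zero by simp
next
  case (insert x N)
  then show ?case using is_poly_add[of m k "F x" "\<lambda>y. \<Sum>x\<in>N. F x y"] by simp
qed

lemma adm_mono: "adm m k e \<Longrightarrow> k \<le> k' \<Longrightarrow> adm m k' e"
  by (auto simp: adm_def)

lemma is_poly_mono:
  assumes "is_poly m k f" "k \<le> k'"
  shows "is_poly m k' f"
proof -
  obtain E c where 1: "finite E" "\<forall>e\<in>E. adm m k e" "f = (\<lambda>y. \<Sum>e\<in>E. c e * mono_eval m e y)"
    using is_poly_ex[OF assms(1)] by blast
  have "is_poly m k' (\<lambda>y. \<Sum>e\<in>E. c e * mono_eval m e y)"
    using 1 assms(2) by (intro is_poly_gen) (auto intro: adm_mono)
  then show ?thesis using 1(3) by simp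
qed

lemma is_poly_sigma:
  assumes "is_poly m k f"
  shows "is_poly m (Suc k) (\<lambda>y. sigma m y * f y)"
proof -
  obtain E c where 1: "finite E" "\<forall>e\<in>E. adm m k e" "f = (\<lambda>y. \<Sum>e\<in>E. c e * mono_eval m e y)"
    using is_poly_ex[OF assms(1)] by blast
  define ex where "ex = (\<lambda>(i::nat, e::nat\<Rightarrow>nat). e(i := Suc (e i)))"
  have adm: "adm m (Suc k) (ex p)" if "p \<in> {..<m} \<times> E" for p
  proof -
    obtain i e where p0: "p = (i, e)" by (cases p)
    have p: "p = (i, e)" "i < m" "e \<in> E" using that p0 by auto
    have "(\<Sum>j<m. (e(i := Suc (e i))) j) = Suc (\<Sum>j<m. e j)"
    proof -
      have "(\<Sum>j<m. (e(i := Suc (e i))) j) = (\<Sum>j<m. e j + (if j = i then 1 else 0))"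
        by (intro sum.cong refl) auto
      also have "\<dots> = (\<Sum>j<m. e j) + 1" using p(2) by (simp add: sum.distrib)
      finally show ?thesis by simp
    qed
    then show ?thesis using 1(2) p(3) p by (auto simp: adm_def ex_def)
  qed
  have me: "mono_eval m (ex (i, e)) y = y i * mono_eval m e y" if "i < m" for i e y
  proof -
    have "mono_eval m (ex (i, e)) y = (\<Prod>j<m. y j ^ e j * (if j = i then y j else 1))"
      unfolding ex_def mono_eval_def by (intro prod.cong refl) auto
    also have "\<dots> = mono_eval m e y * y i" using that by (simp add: prod.distrib mono_eval_def)
    finally show ?thesis by simp
  qed
  have "is_poly m (Suc k) (\<lambda>y. \<Sum>p\<in>{..<m} \<times> E. c (snd p) * mono_eval m (ex p) y)"
    using 1 adm by (intro is_poly_gen) auto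
  moreover have "(\<lambda>y. \<Sum>p\<in>{..<m} \<times> E. c (snd p) * mono_eval m (ex p) y) = (\<lambda>y. sigma m y * f y)"
  proof
    fix y
    have "(\<Sum>p\<in>{..<m} \<times> E. c (snd p) * mono_eval m (ex p) y) = (\<Sum>i<m. \<Sum>e\<in>E. c e * mono_eval m (ex (i,e)) y)"
      by (simp add: sum.cartesian_product split_beta)
    also have "\<dots> = (\<Sum>i<m. \<Sum>e\<in>E. y i * (c e * mono_eval m e y))"
      by (intro sum.cong refl) (simp add: me mult_ac)
    also have "\<dots> = sigma m y * f y"
      by (simp add: 1(3) sigma_def sum_distrib_left sum_distrib_right sum.swap[of _ E])
    finally show "(\<Sum>p\<in>{..<m} \<times> E. c (snd p) * mono_eval m (ex p) y) = sigma m y * f y" .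
  qed
  ultimately show ?thesis by simp
qed

lemma is_poly_bounded:
  assumes "is_poly m k f"
  shows "\<exists>K. \<forall>y\<in>cube m. \<bar>f y\<bar> \<le> K"
proof -
  obtain E c where 1: "finite E" "\<forall>e\<in>E. adm m k e" "f = (\<lambda>y. \<Sum>e\<in>E. c e * mono_eval m e y)"
    using is_poly_ex[OF assms(1)] by blast
  have "\<bar>f y\<bar> \<le> (\<Sum>e\<in>E. \<bar>c e\<bar>)" if "y \<in> cube m" for y
  proof -
    have mb: "\<bar>mono_eval m e y\<bar> \<le> 1" for e
      unfolding mono_eval_def abs_prod using that
      by (intro prod_le_1) (auto simp: cube_def power_le_one)
    have "\<bar>f y\<bar> \<le> (\<Sum>e\<in>E. \<bar>c e * mono_eval m e y\<bar>)" unfolding 1(3) by (rule sum_abs)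
    also have "\<dots> \<le> (\<Sum>e\<in>E. \<bar>c e\<bar>)"
      using mb by (intro sum_mono) (simp add: abs_mult mult_left_le)
    finally show ?thesis .
  qed
  then show ?thesis by blast
qed

lemma is_poly_0_const:
  assumes "is_poly m 0 f"
  shows "f y = f z"
proof -
  obtain E c where 1: "finite E" "\<forall>e\<in>E. adm m 0 e" "f = (\<lambda>y. \<Sum>e\<in>E. c e * mono_eval m e y)"
    using is_poly_ex[OF assms(1)] by blast
  have "mono_eval m e y = 1" if "e \<in> E" for e y
    using 1(2) that by (auto simp: adm_def mono_eval_def)
  then show ?thesis using 1(3) by simp
qed

lemma is_poly_line:
  assumes "is_poly m k f"
  shows "\<exists>p. \<forall>t. f (\<lambda>i. a i + t * (b i - a i)) = poly p t"
proof -
  obtain E c where 1: "finite E" "\<forall>e\<in>E. adm m k e" "f = (\<lambda>y. \<Sum>e\<in>E. c e * mono_eval m e y)"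
    using is_poly_ex[OF assms(1)] by blast
  define p where "p = (\<Sum>e\<in>E. smult (c e) (\<Prod>i<m. [:a i, b i - a i:] ^ e i))"
  have "f (\<lambda>i. a i + t * (b i - a i)) = poly p t" for t
    by (simp add: 1(3) p_def poly_sum poly_prod mono_eval_def algebra_simps)
  then show ?thesis by blast
qed



definition nbhd :: "nat \<Rightarrow> (nat \<Rightarrow> real) \<Rightarrow> (nat \<Rightarrow> real) filter" where
  "nbhd m c = (INF d\<in>{0<..}. principal {y. \<forall>i<m. \<bar>y i - c i\<bar> < d})"

lemma eventually_nbhd:
  "eventually P (nbhd m c) \<longleftrightarrow> (\<exists>d>0. \<forall>y. (\<forall>i<m. \<bar>y i - c i\<bar> < d) \<longrightarrow> P y)"
  unfolding nbhd_def
proof (subst eventually_INF_base)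
  show "{0<..} \<noteq> ({} :: real set)" by auto
  fix a b :: real assume "a \<in> {0<..}" "b \<in> {0<..}"
  then show "\<exists>x\<in>{0<..}. principal {y. \<forall>i<m. \<bar>y i - c i\<bar> < x} \<le>
      inf (principal {y. \<forall>i<m. \<bar>y i - c i\<bar> < a}) (principal {y. \<forall>i<m. \<bar>y i - c i\<bar> < b})"
    by (intro bexI[of _ "min a b"]) auto
qed (auto simp: eventually_principal)

lemma tendsto_coord: "i < m \<Longrightarrow> ((\<lambda>y. y i) \<longlongrightarrow> c i) (nbhd m c)"
  unfolding tendsto_iff eventually_nbhd dist_real_def
  by (metis (mono_tags, lifting))

lemma tendsto_poly_nbhd:
  assumes "is_poly m k f"
  shows "(f \<longlongrightarrow> f c) (nbhd m c)"
proof -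
  obtain E co where 1: "finite E" "\<forall>e\<in>E. adm m k e" "f = (\<lambda>y. \<Sum>e\<in>E. co e * mono_eval m e y)"
    using is_poly_ex[OF assms(1)] by blast
  have "((\<lambda>y. \<Sum>e\<in>E. co e * (\<Prod>i<m. y i ^ e i)) \<longlongrightarrow> (\<Sum>e\<in>E. co e * (\<Prod>i<m. c i ^ e i))) (nbhd m c)"
    by (intro tendsto_intros tendsto_coord) auto
  then show ?thesis by (simp add: 1(3) mono_eval_def)
qed

lemma tendsto_weight_nbhd:
  assumes "\<And>i. i < m \<Longrightarrow> 0 < c i \<and> c i < 1"
  shows "(weight m n \<longlongrightarrow> weight m n c) (nbhd m c)"
proof -
  have v: "((\<lambda>y. \<Prod>i<m. \<Prod>j<m. if i < j then \<bar>y i - y j\<bar> else 1) \<longlongrightarrow>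
      (\<Prod>i<m. \<Prod>j<m. if i < j then \<bar>c i - c j\<bar> else 1)) (nbhd m c)"
  proof (intro tendsto_prod)
    fix i j assume "i \<in> {..<m}" "j \<in> {..<m}"
    then have ij: "i < m" "j < m" by auto
    show "((\<lambda>y. if i < j then \<bar>y i - y j\<bar> else 1) \<longlongrightarrow> (if i < j then \<bar>c i - c j\<bar> else 1)) (nbhd m c)"
      using ij by (cases "i < j") (auto intro!: tendsto_intros tendsto_coord)
  qed
  have w: "((\<lambda>y. \<Prod>i<m. y i powr (-1/2) * (1 - y i) powr (real n / 2 - real m - 1/2)) \<longlongrightarrow>
      (\<Prod>i<m. c i powr (-1/2) * (1 - c i) powr (real n / 2 - real m - 1/2))) (nbhd m c)"
  proof (intro tendsto_prod)
    fix i assume "i \<in> {..<m}"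
    then have i: "i < m" by auto
    have c: "c i \<noteq> 0" "1 - c i \<noteq> 0" using assms[OF i] by auto
    show "((\<lambda>y. y i powr (-1/2) * (1 - y i) powr (real n / 2 - real m - 1/2)) \<longlongrightarrow>
       c i powr (-1/2) * (1 - c i) powr (real n / 2 - real m - 1/2)) (nbhd m c)"
      by (intro tendsto_mult tendsto_powr[OF _ tendsto_const] tendsto_diff tendsto_const tendsto_coord[of i m c, OF i] c)
  qed
  show ?thesis unfolding weight_def by (rule tendsto_mult[OF v w])
qed

lemma weight_pos:
  assumes "\<And>i. i < m \<Longrightarrow> 0 < c i \<and> c i < 1" "\<And>i j. i < j \<Longrightarrow> j < m \<Longrightarrow> c i \<noteq> c j"
  shows "0 < weight m n c"
proof -
  have h1: "0 < (if i < j then \<bar>c i - c j\<bar> else 1)" if "i < m" "j < m" for i j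
    using assms(2)[of i j] that by auto
  have h2: "0 < c i powr (-1/2) * (1 - c i) powr (real n / 2 - real m - 1/2)" if "i < m" for i
    using assms(1)[OF that] by auto
  have A: "0 < (\<Prod>i<m. \<Prod>j<m. if i < j then \<bar>c i - c j\<bar> else 1)"
  proof (rule prod_pos)
    fix i assume i: "i \<in> {..<m}"
    show "0 < (\<Prod>j<m. if i < j then \<bar>c i - c j\<bar> else 1)"
    proof (rule prod_pos)
      fix j assume "j \<in> {..<m}"
      then show "0 < (if i < j then \<bar>c i - c j\<bar> else 1)" using i by (intro h1) auto
    qed
  qed
  have B: "0 < (\<Prod>i<m. c i powr (-1/2) * (1 - c i) powr (real n / 2 - real m - 1/2))"
  proof (rule prod_pos)
    fix i assume "i \<in> {..<m}"
    then show "0 < c i powr (-1/2) * (1 - c i) powr (real n / 2 - real m - 1/2)" by (intro h2) auto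
  qed
  show ?thesis unfolding weight_def using A B by (rule mult_pos_pos)
qed

lemma Ipos:
  assumes mn: "2 * m \<le> n" and f: "is_poly m k f" and b: "f b \<noteq> 0"
  shows "0 < (\<integral>y. indicator (cube m) y * weight m n y * f y * f y \<partial>Lm m)"
proof -
  define a :: "nat \<Rightarrow> real" where "a = (\<lambda>i. real (Suc i) / real (m + 2))"
  define L where "L = (\<lambda>t::real. \<lambda>i. a i + t * (b i - a i))"
  obtain p where p: "\<And>t. f (L t) = poly p t" using is_poly_line[OF f, of a b] unfolding L_def by blast
  define q where "q = (\<Prod>i<m. \<Prod>j<m. if i < j then [:a i - a j, (b i - a i) - (b j - a j):] else 1)"
  have q: "poly q t = (\<Prod>i<m. \<Prod>j<m. if i < j then L t i - L t j else 1)" for t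
    unfolding q_def L_def poly_prod by (intro prod.cong refl) (auto simp: algebra_simps)
  have "poly p 1 \<noteq> 0" using b p[of 1] by (simp add: L_def)
  then have p0: "p \<noteq> 0" by auto
  have aij: "a i - a j \<noteq> 0" if "i < j" for i j using that by (auto simp: a_def divide_simps)
  have "poly q 0 \<noteq> 0" unfolding q L_def using aij by (auto simp: prod_zero_iff)
  then have q0: "q \<noteq> 0" by auto
  have fin: "finite {t. poly (p * q) t = 0}" using p0 q0 by (intro poly_roots_finite) auto
  have a01: "0 < a i \<and> a i < 1" if "i < m" for i using that by (auto simp: a_def divide_simps)
  have "eventually (\<lambda>t. \<forall>i\<in>{..<m}. 0 < L t i \<and> L t i < 1) (at_right 0)"
  proof (intro eventually_ball_finite ballI)
    fix i assume "i \<in> {..<m}"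
    then have i: "0 < a i" "a i < 1" using a01 by auto
    have "((\<lambda>t. L t i) \<longlongrightarrow> a i + 0 * (b i - a i)) (at_right 0)"
      unfolding L_def by (intro tendsto_intros)
    then have t: "((\<lambda>t. L t i) \<longlongrightarrow> a i) (at_right 0)" by simp
    show "eventually (\<lambda>t. 0 < L t i \<and> L t i < 1) (at_right 0)"
      using order_tendstoD(1)[OF t i(1)] order_tendstoD(2)[OF t i(2)] by (rule eventually_conj)
  qed auto
  then obtain eps where eps: "eps > 0" "\<And>t. 0 < t \<Longrightarrow> t < eps \<Longrightarrow> \<forall>i<m. 0 < L t i \<and> L t i < 1"
    unfolding eventually_at_right_field by auto
  have "infinite ({0<..<eps} - {t. poly (p * q) t = 0})"
    using fin eps(1) by (intro Diff_infinite_finite) auto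
  then obtain t where "t \<in> {0<..<eps} - {t. poly (p * q) t = 0}"
    using infinite_imp_nonempty by blast
  then have t: "t \<in> {0<..<eps}" "poly (p * q) t \<noteq> 0" by auto
  define c where "c = L t"
  have c01: "\<And>i. i < m \<Longrightarrow> 0 < c i \<and> c i < 1" using eps(2)[of t] t(1) by (auto simp: c_def)
  have fc: "f c \<noteq> 0" using t(2) p[of t] by (simp add: c_def)
  have cdist: "c i \<noteq> c j" if "i < j" "j < m" for i j
  proof
    assume "c i = c j"
    then have "(if i < j then L t i - L t j else 1) = 0" using that by (simp add: c_def)
    note h1 = this
    have "(\<Prod>j<m. if i < j then L t i - L t j else 1) = 0"
      by (rule prod_zero, simp, rule bexI[of _ j], rule h1) (use that in simp)
    note hz = this
    have "poly q t = 0" unfolding q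
      by (rule prod_zero, simp, rule bexI[of _ i], rule hz) (use that in simp)
    then show False using t(2) by simp
  qed
  define w0 where "w0 = weight m n c * f c * f c"
  have wp: "0 < weight m n c" by (rule weight_pos) (use c01 cdist in auto)
  have "0 < f c * f c" using fc not_real_square_gt_zero by blast
  then have w0: "0 < w0" unfolding w0_def using wp
    by (simp add: mult.assoc)
  have lim: "((\<lambda>y. weight m n y * f y * f y) \<longlongrightarrow> w0) (nbhd m c)"
    unfolding w0_def using c01 by (intro tendsto_intros tendsto_weight_nbhd tendsto_poly_nbhd[OF f])
  have ev1: "eventually (\<lambda>y. w0 / 2 < weight m n y * f y * f y) (nbhd m c)"
    using lim w0 by (intro order_tendstoD(1)) auto
  have ev2: "eventually (\<lambda>y. \<forall>i\<in>{..<m}. 0 \<le> y i \<and> y i \<le> 1) (nbhd m c)"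
  proof (intro eventually_ball_finite ballI)
    fix i assume "i \<in> {..<m}"
    then have i: "i < m" by simp
    show "eventually (\<lambda>y. 0 \<le> y i \<and> y i \<le> 1) (nbhd m c)"
      using order_tendstoD(1)[OF tendsto_coord[of i m c, OF i] conjunct1[OF c01[OF i]]]
        order_tendstoD(2)[OF tendsto_coord[of i m c, OF i] conjunct2[OF c01[OF i]]]
      by eventually_elim auto
  qed auto
  obtain d where d: "d > 0" "\<And>y. (\<forall>i<m. \<bar>y i - c i\<bar> < d) \<Longrightarrow>
      w0 / 2 < weight m n y * f y * f y \<and> (\<forall>i\<in>{..<m}. 0 \<le> y i \<and> y i \<le> 1)"
    using eventually_conj[OF ev1 ev2] unfolding eventually_nbhd by blast
  define B where "B = PiE {..<m} (\<lambda>i. {c i - d/2 .. c i + d/2})"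
  have Bsets: "B \<in> sets (Lm m)" unfolding B_def Lm_def by (intro sets_PiM_I_finite) auto
  have "emeasure (Lm m) B = (\<Prod>i<m. emeasure lborel {c i - d/2 .. c i + d/2})"
    unfolding B_def Lm_def by (intro lbprod.emeasure_PiM) auto
  also have "\<dots> = (\<Prod>i<m. ennreal d)" using d(1) by simp
  also have "\<dots> = ennreal (d ^ m)" using d(1) by (simp add: ennreal_power)
  finally have mB: "emeasure (Lm m) B = ennreal (d ^ m)" .
  then have mB': "measure (Lm m) B = d ^ m" using d(1) by (simp add: measure_def)
  obtain K where K: "\<forall>y\<in>cube m. \<bar>f y\<bar> \<le> K" using is_poly_bounded[OF f] by blast
  have intf: "integrable (Lm m) (\<lambda>y. indicator (cube m) y * weight m n y * (f y * f y))"
  proof (rule int_weight[OF mn])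
    show "(\<lambda>y. f y * f y) \<in> borel_measurable (Lm m)"
      using f unfolding is_poly_def Lm_def mono_eval_def by auto
    fix y assume "y \<in> cube m"
    then have "\<bar>f y\<bar> \<le> K" using K by auto
    then show "\<bar>f y * f y\<bar> \<le> K * K" unfolding abs_mult by (intro mult_mono) auto
  qed
  have "0 < (w0 / 2) * measure (Lm m) B" using w0 d(1) mB' by simp
  also have "\<dots> = (\<integral>y. (w0/2) * indicator B y \<partial>Lm m)"
    using Bsets mB by simp
  also have "\<dots> \<le> (\<integral>y. indicator (cube m) y * weight m n y * (f y * f y) \<partial>Lm m)"
  proof (rule integral_mono[OF _ intf])
    show "integrable (Lm m) (\<lambda>y. w0 / 2 * indicator B y)"
      using Bsets mB by (intro Bochner_Integration.integrable_mult_right integrable_real_indicator) auto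
    fix y assume "y \<in> space (Lm m)"
    show "w0 / 2 * indicator B y \<le> indicator (cube m) y * weight m n y * (f y * f y)"
    proof (cases "y \<in> B")
      case True
      have "\<forall>i<m. \<bar>y i - c i\<bar> < d"
      proof (intro allI impI)
        fix i assume "i < m"
        then have "y i \<in> {c i - d/2 .. c i + d/2}" using True by (auto simp: B_def PiE_iff)
        then show "\<bar>y i - c i\<bar> < d" using d(1) by (auto simp: abs_less_iff)
      qed
      from d(2)[OF this] have "w0 / 2 < weight m n y * f y * f y" "y \<in> cube m"
        by (auto simp: cube_def)
      then show ?thesis using True by (simp add: mult.assoc)
    next
      case False
      then show ?thesis using weight_nonneg[of m n y]
        by (simp add: indicator_def)
    qed
  qed
  finally show ?thesis by (simp add: mult.assoc)
qed



lemma symm_add: "symmetric_fn m f \<Longrightarrow> symmetric_fn m g \<Longrightarrow> symmetric_fn m (\<lambda>y. f y + g y)"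
  by (simp add: symmetric_fn_def)
lemma symm_scale: "symmetric_fn m f \<Longrightarrow> symmetric_fn m (\<lambda>y. a * f y)"
  by (simp add: symmetric_fn_def)
lemma symm_zero: "symmetric_fn m (\<lambda>y. 0)"
  by (simp add: symmetric_fn_def)
lemma symm_sum: "(\<And>x. x \<in> N \<Longrightarrow> symmetric_fn m (F x)) \<Longrightarrow> symmetric_fn m (\<lambda>y. \<Sum>x\<in>N. F x y)"
  by (simp add: symmetric_fn_def)
lemma symm_sigma: "symmetric_fn m f \<Longrightarrow> symmetric_fn m (\<lambda>y. sigma m y * f y)"
  unfolding symmetric_fn_def sigma_def
proof (intro allI impI)
  fix \<pi> and y :: "nat \<Rightarrow> real" assume f: "\<forall>\<pi>. \<pi> permutes {..<m} \<longrightarrow> (\<forall>y. f (y \<circ> \<pi>) = f y)" and p: "\<pi> permutes {..<m}"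
  have "(\<Sum>i<m. (y \<circ> \<pi>) i) = (\<Sum>i<m. y i)"
    using sum.permute[OF p, of y] by simp
  then show "(\<Sum>i<m. (y \<circ> \<pi>) i) * f (y \<circ> \<pi>) = (\<Sum>i<m. y i) * f y" using f p by simp
qed

lemma Sk_add: "f \<in> Sk m k \<Longrightarrow> g \<in> Sk m k \<Longrightarrow> (\<lambda>y. f y + g y) \<in> Sk m k"
  by (simp add: Sk_def is_poly_add symm_add)
lemma Sk_scale: "f \<in> Sk m k \<Longrightarrow> (\<lambda>y. a * f y) \<in> Sk m k"
  by (simp add: Sk_def is_poly_scale symm_scale)
lemma Sk_diff: "f \<in> Sk m k \<Longrightarrow> g \<in> Sk m k \<Longrightarrow> (\<lambda>y. f y - g y) \<in> Sk m k"
  using Sk_add[of f m k "\<lambda>y. (-1) * g y"] Sk_scale[of g m k "-1"] by simp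
lemma Sk_sum: "finite N \<Longrightarrow> (\<And>x. x \<in> N \<Longrightarrow> F x \<in> Sk m k) \<Longrightarrow> (\<lambda>y. \<Sum>x\<in>N. F x y) \<in> Sk m k"
  by (simp add: Sk_def is_poly_sum symm_sum)
lemma Sk_mono: "f \<in> Sk m k \<Longrightarrow> k \<le> k' \<Longrightarrow> f \<in> Sk m k'"
  by (auto simp: Sk_def intro: is_poly_mono)
lemma Sk_sigma: "f \<in> Sk m k \<Longrightarrow> (\<lambda>y. sigma m y * f y) \<in> Sk m (Suc k)"
  by (simp add: Sk_def is_poly_sigma symm_sigma)

lemma ip_alt: "ip m n f g = norm_const m n * (\<integral>y. indicator (cube m) y * weight m n y * (f y * g y) \<partial>Lm m)"
  unfolding ip_def by (simp add: mult.assoc)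

lemma ip_sym: "ip m n f g = ip m n g f"
  unfolding ip_alt by (simp add: mult.commute)

lemma ip_sigma: "ip m n (\<lambda>y. sigma m y * f y) g = ip m n f (\<lambda>y. sigma m y * g y)"
  unfolding ip_alt by (simp add: mult_ac)

lemma ip_zero1: "ip m n (\<lambda>y. 0) g = 0"
  unfolding ip_alt by simp

lemma int_pp:
  assumes "2 * m \<le> n" "is_poly m k f" "is_poly m k' g"
  shows "integrable (Lm m) (\<lambda>y. indicator (cube m) y * weight m n y * (f y * g y))"
proof -
  obtain K1 where K1: "\<forall>y\<in>cube m. \<bar>f y\<bar> \<le> K1" using is_poly_bounded[OF assms(2)] by blast
  obtain K2 where K2: "\<forall>y\<in>cube m. \<bar>g y\<bar> \<le> K2" using is_poly_bounded[OF assms(3)] by blast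
  show ?thesis
  proof (rule int_weight[OF assms(1)])
    show "(\<lambda>y. f y * g y) \<in> borel_measurable (Lm m)"
      using assms(2,3) unfolding is_poly_def Lm_def mono_eval_def by auto
    fix y assume "y \<in> cube m"
    then have "\<bar>f y\<bar> \<le> K1" "\<bar>g y\<bar> \<le> K2" using K1 K2 by auto
    then show "\<bar>f y * g y\<bar> \<le> K1 * K2" unfolding abs_mult by (intro mult_mono) auto
  qed
qed

lemma ip_sum1:
  assumes "2 * m \<le> n" "finite N" "\<And>x. x \<in> N \<Longrightarrow> is_poly m (k x) (F x)" "is_poly m k' g"
  shows "ip m n (\<lambda>y. \<Sum>x\<in>N. a x * F x y) g = (\<Sum>x\<in>N. a x * ip m n (F x) g)"
proof -
  have "(\<integral>y. indicator (cube m) y * weight m n y * ((\<Sum>x\<in>N. a x * F x y) * g y) \<partial>Lm m) =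
      (\<integral>y. (\<Sum>x\<in>N. a x * (indicator (cube m) y * weight m n y * (F x y * g y))) \<partial>Lm m)"
    by (intro Bochner_Integration.integral_cong refl) (simp add: sum_distrib_left sum_distrib_right mult_ac)
  also have "\<dots> = (\<Sum>x\<in>N. a x * (\<integral>y. indicator (cube m) y * weight m n y * (F x y * g y) \<partial>Lm m))"
    using assms by (subst Bochner_Integration.integral_sum)
       (auto intro!: Bochner_Integration.integrable_mult_right int_pp)
  finally show ?thesis unfolding ip_alt by (simp add: sum_distrib_left mult_ac)
qed

lemma ip_diff1:
  assumes "2 * m \<le> n" "is_poly m k f" "is_poly m k' h" "is_poly m k'' g"
  shows "ip m n (\<lambda>y. f y - h y) g = ip m n f g - ip m n h g"
proof -
  have "(\<integral>y. indicator (cube m) y * weight m n y * ((f y - h y) * g y) \<partial>Lm m) =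
      (\<integral>y. indicator (cube m) y * weight m n y * (f y * g y) - indicator (cube m) y * weight m n y * (h y * g y) \<partial>Lm m)"
    by (intro Bochner_Integration.integral_cong refl) (simp add: algebra_simps)
  also have "\<dots> = (\<integral>y. indicator (cube m) y * weight m n y * (f y * g y) \<partial>Lm m) -
      (\<integral>y. indicator (cube m) y * weight m n y * (h y * g y) \<partial>Lm m)"
    using assms by (intro Bochner_Integration.integral_diff int_pp)
  finally have e: "(\<integral>y. indicator (cube m) y * weight m n y * ((f y - h y) * g y) \<partial>Lm m) =
     (\<integral>y. indicator (cube m) y * weight m n y * (f y * g y) \<partial>Lm m) -
      (\<integral>y. indicator (cube m) y * weight m n y * (h y * g y) \<partial>Lm m)" .
  show ?thesis unfolding ip_alt e by (rule right_diff_distrib)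
qed

lemma ip_add1:
  assumes "2 * m \<le> n" "is_poly m k f" "is_poly m k' h" "is_poly m k'' g"
  shows "ip m n (\<lambda>y. f y + h y) g = ip m n f g + ip m n h g"
proof -
  have "(\<integral>y. indicator (cube m) y * weight m n y * ((f y + h y) * g y) \<partial>Lm m) =
      (\<integral>y. indicator (cube m) y * weight m n y * (f y * g y) + indicator (cube m) y * weight m n y * (h y * g y) \<partial>Lm m)"
    by (intro Bochner_Integration.integral_cong refl) (simp add: algebra_simps)
  also have "\<dots> = (\<integral>y. indicator (cube m) y * weight m n y * (f y * g y) \<partial>Lm m) +
      (\<integral>y. indicator (cube m) y * weight m n y * (h y * g y) \<partial>Lm m)"
    using assms by (intro Bochner_Integration.integral_add int_pp)
  finally have e: "(\<integral>y. indicator (cube m) y * weight m n y * ((f y + h y) * g y) \<partial>Lm m) =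
     (\<integral>y. indicator (cube m) y * weight m n y * (f y * g y) \<partial>Lm m) +
      (\<integral>y. indicator (cube m) y * weight m n y * (h y * g y) \<partial>Lm m)" .
  show ?thesis unfolding ip_alt e by (rule distrib_left)
qed

lemma ip_scale1: "ip m n (\<lambda>y. a * f y) g = a * ip m n f g"
  unfolding ip_alt by (simp add: mult_ac)

lemma norm_const_pos:
  assumes "2 * m \<le> n"
  shows "0 < norm_const m n"
proof -
  have "0 < (\<integral>y. indicator (cube m) y * weight m n y * 1 * 1 \<partial>Lm m)"
    using Ipos[OF assms is_poly_const[of m 0 1]] by simp
  then show ?thesis unfolding norm_const_def by simp
qed

lemma ip_pos:
  assumes "2 * m \<le> n" "is_poly m k f" "f b \<noteq> 0"
  shows "0 < ip m n f f"
  unfolding ip_def using Ipos[OF assms] norm_const_pos[OF assms(1)] by simp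

lemma ip_eq0:
  assumes "2 * m \<le> n" "is_poly m k f" "ip m n f f = 0"
  shows "f = (\<lambda>_. 0)"
  using ip_pos[OF assms(1,2)] assms(3) by fastforce



lemma parts_le_finite: "finite (parts_le m j)"
proof -
  have "parts_le m j \<subseteq> (\<lambda>g i. if i < m then g i else 0) ` (PiE {..<m} (\<lambda>_. {..j}))"
  proof
    fix \<kappa> assume k: "\<kappa> \<in> parts_le m j"
    then have p: "\<forall>i\<ge>m. \<kappa> i = 0" "(\<Sum>i<m. \<kappa> i) \<le> j"
      by (auto simp: parts_le_def is_partition_def psize_def)
    have le: "\<kappa> i \<le> j" if "i < m" for i
    proof -
      have "\<kappa> i \<le> (\<Sum>i<m. \<kappa> i)" by (rule member_le_sum) (use that in auto)
      then show ?thesis using p(2) by linarith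
    qed
    have "\<kappa> = (\<lambda>i. if i < m then restrict \<kappa> {..<m} i else 0)"
      using p(1) by (auto simp: fun_eq_iff not_less)
    moreover have "restrict \<kappa> {..<m} \<in> PiE {..<m} (\<lambda>_. {..j})" using le by auto
    ultimately show "\<kappa> \<in> (\<lambda>g i. if i < m then g i else 0) ` (PiE {..<m} (\<lambda>_. {..j}))"
      by (rule image_eqI)
  qed
  moreover have "finite (PiE {..<m} (\<lambda>_. {..j::nat}))" by (intro finite_PiE) auto
  ultimately show ?thesis by (metis finite_imageI finite_subset)
qed



theorem lemma4p3:
  fixes m n k :: nat
    and P :: "(nat \<Rightarrow> nat) \<Rightarrow> (nat \<Rightarrow> real) \<Rightarrow> real"
    and A B C :: "(nat \<Rightarrow> nat) \<Rightarrow> (nat \<Rightarrow> nat) \<Rightarrow> real"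
    and \<alpha> :: "nat \<Rightarrow> real"
  assumes "1 \<le> m" and "2 * m \<le> n"
    and zonal: "zonal_family m n P"
    and rec: "\<And>\<kappa>. \<kappa> \<in> parts_eq m k \<Longrightarrow>
       (\<lambda>y. sigma m y * P \<kappa> y) =
       (\<lambda>y. (\<Sum>\<mu>\<in>parts_eq m (k + 1). A \<kappa> \<mu> * P \<mu> y)
          + (\<Sum>\<mu>\<in>parts_eq m k. B \<kappa> \<mu> * P \<mu> y)
          + (\<Sum>\<mu>\<in>{\<mu>. is_partition m \<mu> \<and> psize m \<mu> + 1 = k}. C \<kappa> \<mu> * P \<mu> y))"
    and alpha: "\<alpha> \<in> cube m"
    and zero: "\<And>\<kappa>. \<kappa> \<in> parts_eq m k \<Longrightarrow> (\<Sum>\<mu>\<in>parts_eq m (k + 1). A \<kappa> \<mu> * P \<mu> \<alpha>) = 0"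
  shows "let v = (\<lambda>y. \<Sum>\<nu>\<in>parts_le m k. dz m n P \<nu> * P \<nu> \<alpha> * P \<nu> y)
         in v \<in> Sk m k \<and> v \<noteq> (\<lambda>_. 0) \<and> Tk m n k v = (\<lambda>y. sigma m \<alpha> * v y)"
proof -
  have mn: "2 * m \<le> n" by fact
  note Z = zonal[unfolded zonal_family_def]
  have Psk: "P \<kappa> \<in> Sk m (psize m \<kappa>)" if "is_partition m \<kappa>" for \<kappa> using Z that by blast
  have P1: "P \<kappa> (\<lambda>_. 1) = 1" if "is_partition m \<kappa>" for \<kappa> using Z that by blast
  have orth: "ip m n (P \<kappa>) (P \<rho>) = 0" if "is_partition m \<kappa>" "is_partition m \<rho>" "\<kappa> \<noteq> \<rho>" for \<kappa> \<rho>
    using Z that by blast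
  have span: "\<exists>c. f = (\<lambda>y. \<Sum>\<kappa>\<in>parts_le m j. c \<kappa> * P \<kappa> y)" if "f \<in> Sk m j" for f j
    using Z that by blast
  have Ppoly: "is_poly m (psize m \<kappa>) (P \<kappa>)" if "is_partition m \<kappa>" for \<kappa>
    using Psk[OF that] by (simp add: Sk_def)
  have Ppos: "0 < ip m n (P \<kappa>) (P \<kappa>)" if "is_partition m \<kappa>" for \<kappa>
    using ip_pos[OF mn Ppoly[OF that], of "\<lambda>_. 1"] P1[OF that] by simp
  have parN: "is_partition m \<nu>" if "\<nu> \<in> parts_le m j" for \<nu> j using that by (simp add: parts_le_def)
  have parE: "is_partition m \<nu>" "psize m \<nu> = j" if "\<nu> \<in> parts_eq m j" for \<nu> j
    using that by (auto simp: parts_eq_def)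
  have finE: "finite (parts_eq m j)" for j
    by (rule finite_subset[OF _ parts_le_finite[of m j]]) (auto simp: parts_eq_def parts_le_def)
  have ipexp: "ip m n (\<lambda>y. \<Sum>\<kappa>\<in>S. c \<kappa> * P \<kappa> y) (P \<nu>) = (if \<nu> \<in> S then c \<nu> * ip m n (P \<nu>) (P \<nu>) else 0)"
    if S: "finite S" "\<And>\<kappa>. \<kappa> \<in> S \<Longrightarrow> is_partition m \<kappa>" and nu: "is_partition m \<nu>" for S c \<nu>
  proof -
    have "ip m n (\<lambda>y. \<Sum>\<kappa>\<in>S. c \<kappa> * P \<kappa> y) (P \<nu>) = (\<Sum>\<kappa>\<in>S. c \<kappa> * ip m n (P \<kappa>) (P \<nu>))"
      using S nu by (intro ip_sum1[OF mn _ Ppoly Ppoly])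
    also have "\<dots> = (\<Sum>\<kappa>\<in>S. if \<kappa> = \<nu> then c \<nu> * ip m n (P \<nu>) (P \<nu>) else 0)"
      using S nu orth by (intro sum.cong refl) auto
    also have "\<dots> = (if \<nu> \<in> S then c \<nu> * ip m n (P \<nu>) (P \<nu>) else 0)"
      using S(1) by (simp add: sum.delta)
    finally show ?thesis .
  qed
  define v where "v = (\<lambda>y. \<Sum>\<nu>\<in>parts_le m k. dz m n P \<nu> * P \<nu> \<alpha> * P \<nu> y)"
  have vSk: "v \<in> Sk m k" unfolding v_def
  proof (intro Sk_sum parts_le_finite)
    fix \<nu> assume "\<nu> \<in> parts_le m k"
    then have "is_partition m \<nu>" "psize m \<nu> \<le> k" by (auto simp: parts_le_def)
    then show "(\<lambda>y. dz m n P \<nu> * P \<nu> \<alpha> * P \<nu> y) \<in> Sk m k"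
      by (intro Sk_scale Sk_mono[OF Psk])
  qed
  have vpoly: "is_poly m k v" using vSk by (simp add: Sk_def)
  have ipv: "ip m n v (P \<rho>) = P \<rho> \<alpha>" if "\<rho> \<in> parts_le m k" for \<rho>
  proof -
    have "ip m n v (P \<rho>) = dz m n P \<rho> * P \<rho> \<alpha> * ip m n (P \<rho>) (P \<rho>)"
      unfolding v_def using that by (subst ipexp) (auto intro: parN parts_le_finite)
    then show ?thesis using Ppos[OF parN[OF that]] by (simp add: dz_def)
  qed
  have ipsv: "ip m n (\<lambda>y. sigma m y * v y) (P \<rho>) = sigma m \<alpha> * P \<rho> \<alpha>" if rho: "\<rho> \<in> parts_le m k" for \<rho>
  proof -
    have rp: "is_partition m \<rho>" "psize m \<rho> \<le> k" using rho by (auto simp: parts_le_def)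
    define g where "g = (\<lambda>y. sigma m y * P \<rho> y)"
    have gSk: "g \<in> Sk m (Suc k)" unfolding g_def using rp by (intro Sk_mono[OF Sk_sigma[OF Psk]]) auto
    obtain b where b: "g = (\<lambda>y. \<Sum>\<kappa>\<in>parts_le m (Suc k). b \<kappa> * P \<kappa> y)" using span[OF gSk] by blast
    have ipg: "ip m n g (P \<nu>) = b \<nu> * ip m n (P \<nu>) (P \<nu>)" if "\<nu> \<in> parts_le m (Suc k)" for \<nu>
      unfolding b using that by (subst ipexp) (auto intro: parN parts_le_finite)
    have "ip m n (\<lambda>y. sigma m y * v y) (P \<rho>) =
        ip m n (\<lambda>y. \<Sum>\<nu>\<in>parts_le m k. (dz m n P \<nu> * P \<nu> \<alpha>) * (sigma m y * P \<nu> y)) (P \<rho>)"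
      unfolding v_def by (simp add: sum_distrib_left mult_ac)
    also have "\<dots> = (\<Sum>\<nu>\<in>parts_le m k. (dz m n P \<nu> * P \<nu> \<alpha>) * ip m n (\<lambda>y. sigma m y * P \<nu> y) (P \<rho>))"
      by (rule ip_sum1[OF mn parts_le_finite _ Ppoly[OF rp(1)]], rule is_poly_sigma, rule Ppoly, erule parN)
    also have "\<dots> = (\<Sum>\<nu>\<in>parts_le m k. (dz m n P \<nu> * P \<nu> \<alpha>) * (b \<nu> * ip m n (P \<nu>) (P \<nu>)))"
    proof (intro sum.cong refl)
      fix \<nu> assume nu: "\<nu> \<in> parts_le m k"
      have "ip m n (\<lambda>y. sigma m y * P \<nu> y) (P \<rho>) = ip m n (P \<nu>) (\<lambda>y. sigma m y * P \<rho> y)"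
        by (rule ip_sigma)
      also have "\<dots> = ip m n g (P \<nu>)" unfolding g_def by (rule ip_sym)
      also have "\<dots> = b \<nu> * ip m n (P \<nu>) (P \<nu>)"
        using nu by (intro ipg) (auto simp: parts_le_def)
      finally show "dz m n P \<nu> * P \<nu> \<alpha> * ip m n (\<lambda>y. sigma m y * P \<nu> y) (P \<rho>) =
          dz m n P \<nu> * P \<nu> \<alpha> * (b \<nu> * ip m n (P \<nu>) (P \<nu>))" by simp
    qed
    also have "\<dots> = (\<Sum>\<nu>\<in>parts_le m k. b \<nu> * P \<nu> \<alpha>)"
    proof (intro sum.cong refl)
      fix \<nu> assume "\<nu> \<in> parts_le m k"
      then have "ip m n (P \<nu>) (P \<nu>) \<noteq> 0" using Ppos[OF parN] by (metis less_irrefl)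
      then show "dz m n P \<nu> * P \<nu> \<alpha> * (b \<nu> * ip m n (P \<nu>) (P \<nu>)) = b \<nu> * P \<nu> \<alpha>"
        by (simp add: dz_def field_simps)
    qed
    also have "\<dots> = sigma m \<alpha> * P \<rho> \<alpha>"
    proof -
      have split: "parts_le m (Suc k) = parts_le m k \<union> parts_eq m (Suc k)"
        by (auto simp: parts_le_def parts_eq_def)
      have disj: "parts_le m k \<inter> parts_eq m (Suc k) = {}"
        by (auto simp: parts_le_def parts_eq_def)
      have rest: "(\<Sum>\<kappa>\<in>parts_eq m (Suc k). b \<kappa> * P \<kappa> \<alpha>) = 0"
      proof (cases "psize m \<rho> < k")
        case True
        have "g \<in> Sk m k" unfolding g_def using rp True by (intro Sk_mono[OF Sk_sigma[OF Psk]]) auto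
        then obtain b' where b': "g = (\<lambda>y. \<Sum>\<kappa>\<in>parts_le m k. b' \<kappa> * P \<kappa> y)" using span by blast
        have "b \<kappa> = 0" if "\<kappa> \<in> parts_eq m (Suc k)" for \<kappa>
        proof -
          have kp: "is_partition m \<kappa>" "\<kappa> \<notin> parts_le m k" "\<kappa> \<in> parts_le m (Suc k)"
            using that by (auto simp: parts_eq_def parts_le_def)
          have "ip m n g (P \<kappa>) = 0" unfolding b' using kp
            by (subst ipexp) (auto intro: parN parts_le_finite)
          then show ?thesis using ipg[OF kp(3)] Ppos[OF kp(1)] by simp
        qed
        then show ?thesis by simp
      next
        case False
        then have rE: "\<rho> \<in> parts_eq m k" using rp by (auto simp: parts_eq_def)
        have "b \<kappa> = A \<rho> \<kappa>" if "\<kappa> \<in> parts_eq m (Suc k)" for \<kappa>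
        proof -
          have kp: "is_partition m \<kappa>" "psize m \<kappa> = Suc k" "\<kappa> \<in> parts_le m (Suc k)"
            using that by (auto simp: parts_eq_def parts_le_def)
          define S1 where "S1 = (\<lambda>y. \<Sum>\<mu>\<in>parts_eq m (k + 1). A \<rho> \<mu> * P \<mu> y)"
          define S2 where "S2 = (\<lambda>y. \<Sum>\<mu>\<in>parts_eq m k. B \<rho> \<mu> * P \<mu> y)"
          define S3 where "S3 = (\<lambda>y. \<Sum>\<mu>\<in>{\<mu>. is_partition m \<mu> \<and> psize m \<mu> + 1 = k}. C \<rho> \<mu> * P \<mu> y)"
          have fin3: "finite {\<mu>. is_partition m \<mu> \<and> psize m \<mu> + 1 = k}"
            by (rule finite_subset[OF _ parts_le_finite[of m k]]) (auto simp: parts_le_def)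
          have pS: "is_poly m (Suc k) S1" "is_poly m (Suc k) S2" "is_poly m (Suc k) S3"
            unfolding S1_def S2_def S3_def
            by (intro is_poly_sum finE fin3 is_poly_scale is_poly_mono[OF Ppoly];
                force dest: parE)+
          have gS: "g = (\<lambda>y. S1 y + S2 y + S3 y)" unfolding g_def S1_def S2_def S3_def using rec[OF rE] by simp
          have "ip m n g (P \<kappa>) = ip m n S1 (P \<kappa>) + ip m n S2 (P \<kappa>) + ip m n S3 (P \<kappa>)"
          proof -
            have "ip m n (\<lambda>y. S1 y + S2 y + S3 y) (P \<kappa>) = ip m n (\<lambda>y. S1 y + S2 y) (P \<kappa>) + ip m n S3 (P \<kappa>)"
              by (rule ip_add1[OF mn is_poly_add[OF pS(1,2)] pS(3) Ppoly[OF kp(1)]])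
            also have "ip m n (\<lambda>y. S1 y + S2 y) (P \<kappa>) = ip m n S1 (P \<kappa>) + ip m n S2 (P \<kappa>)"
              by (rule ip_add1[OF mn pS(1,2) Ppoly[OF kp(1)]])
            finally show ?thesis unfolding gS .
          qed
          also have "ip m n S1 (P \<kappa>) = A \<rho> \<kappa> * ip m n (P \<kappa>) (P \<kappa>)"
            unfolding S1_def using that kp by (subst ipexp) (auto intro: finE dest: parE)
          also have "ip m n S2 (P \<kappa>) = 0"
            unfolding S2_def using kp by (subst ipexp) (auto intro: finE dest: parE)
          also have "ip m n S3 (P \<kappa>) = 0"
            unfolding S3_def using kp fin3 by (subst ipexp) auto
          finally have "ip m n g (P \<kappa>) = A \<rho> \<kappa> * ip m n (P \<kappa>) (P \<kappa>)" by simp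
          then show ?thesis using ipg[OF kp(3)] Ppos[OF kp(1)] by simp
        qed
        then have "(\<Sum>\<kappa>\<in>parts_eq m (Suc k). b \<kappa> * P \<kappa> \<alpha>) = (\<Sum>\<kappa>\<in>parts_eq m (k + 1). A \<rho> \<kappa> * P \<kappa> \<alpha>)"
          by simp
        also have "\<dots> = 0" by (rule zero[OF rE])
        finally show ?thesis .
      qed
      have "sigma m \<alpha> * P \<rho> \<alpha> = g \<alpha>" by (simp add: g_def)
      also have "\<dots> = (\<Sum>\<kappa>\<in>parts_le m (Suc k). b \<kappa> * P \<kappa> \<alpha>)" by (simp add: b)
      also have "\<dots> = (\<Sum>\<kappa>\<in>parts_le m k. b \<kappa> * P \<kappa> \<alpha>) + (\<Sum>\<kappa>\<in>parts_eq m (Suc k). b \<kappa> * P \<kappa> \<alpha>)"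
        unfolding split using disj by (intro sum.union_disjoint parts_le_finite finE)
      finally show ?thesis using rest by simp
    qed
    finally show ?thesis .
  qed
  define w where "w = (\<lambda>y. sigma m y * v y - sigma m \<alpha> * v y)"
  have wpoly: "is_poly m (Suc k) w" unfolding w_def
    by (intro is_poly_add[where g="\<lambda>y. - (sigma m \<alpha> * v y)", simplified] is_poly_sigma vpoly
        is_poly_scale[where a = "- sigma m \<alpha>", simplified] is_poly_mono[OF vpoly]) auto
  have wP: "ip m n w (P \<rho>) = 0" if "\<rho> \<in> parts_le m k" for \<rho>
  proof -
    have "ip m n w (P \<rho>) = ip m n (\<lambda>y. sigma m y * v y) (P \<rho>) - ip m n (\<lambda>y. sigma m \<alpha> * v y) (P \<rho>)"
      unfolding w_def
      by (rule ip_diff1[OF mn is_poly_sigma[OF vpoly] is_poly_scale[OF vpoly] Ppoly[OF parN[OF that]]])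
    also have "\<dots> = 0" using ipsv[OF that] ipv[OF that] by (simp add: ip_scale1)
    finally show ?thesis .
  qed
  have wq: "ip m n w q = 0" if qS: "q \<in> Sk m k" for q
  proof -
    obtain c where c: "q = (\<lambda>y. \<Sum>\<rho>\<in>parts_le m k. c \<rho> * P \<rho> y)" using span[OF qS] by blast
    have "ip m n w q = ip m n q w" by (rule ip_sym)
    also have "\<dots> = (\<Sum>\<rho>\<in>parts_le m k. c \<rho> * ip m n (P \<rho>) w)"
      unfolding c by (rule ip_sum1[OF mn parts_le_finite _ wpoly], rule Ppoly, erule parN)
    also have "\<dots> = 0" using wP by (simp add: ip_sym)
    finally show ?thesis .
  qed
  have hSk: "(\<lambda>y. sigma m \<alpha> * v y) \<in> Sk m k" by (intro Sk_scale vSk)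
  have T: "Tk m n k v = (\<lambda>y. sigma m \<alpha> * v y)"
    unfolding Tk_def
  proof (rule the_equality)
    show "(\<lambda>y. sigma m \<alpha> * v y) \<in> Sk m k \<and>
        (\<forall>q\<in>Sk m k. ip m n (\<lambda>y. sigma m y * v y - sigma m \<alpha> * v y) q = 0)"
      using hSk wq by (simp add: w_def)
  next
    fix h assume h: "h \<in> Sk m k \<and> (\<forall>q\<in>Sk m k. ip m n (\<lambda>y. sigma m y * v y - h y) q = 0)"
    define D where "D = (\<lambda>y. sigma m \<alpha> * v y - h y)"
    have DSk: "D \<in> Sk m k" unfolding D_def using hSk h by (intro Sk_diff) auto
    have hp: "is_poly m k h" using h by (simp add: Sk_def)
    have Dp: "is_poly m k D" using DSk by (simp add: Sk_def)
    have "ip m n D D = ip m n (\<lambda>y. (sigma m y * v y - h y) - w y) D"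
      unfolding D_def w_def by (simp add: algebra_simps)
    also have "\<dots> = ip m n (\<lambda>y. sigma m y * v y - h y) D - ip m n w D"
    proof -
      have p1: "is_poly m (Suc k) (\<lambda>y. sigma m y * v y - h y)"
        using is_poly_add[OF is_poly_sigma[OF vpoly] is_poly_mono[OF is_poly_scale[OF hp, of "-1"], of "Suc k"]]
        by simp
      show ?thesis by (rule ip_diff1[OF mn p1 wpoly Dp])
    qed
    also have "\<dots> = 0" using h DSk wq[OF DSk] by simp
    finally have "D = (\<lambda>_. 0)" by (intro ip_eq0[OF mn Dp])
    then show "h = (\<lambda>y. sigma m \<alpha> * v y)" by (auto simp: D_def fun_eq_iff)
  qed
  have vnz: "v \<noteq> (\<lambda>_. 0)"
  proof
    assume v0: "v = (\<lambda>_. 0)"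
    define \<rho>0 :: "nat \<Rightarrow> nat" where "\<rho>0 = (\<lambda>_. 0)"
    have r0: "\<rho>0 \<in> parts_le m k" "is_partition m \<rho>0" "psize m \<rho>0 = 0"
      by (auto simp: \<rho>0_def parts_le_def is_partition_def psize_def)
    have "P \<rho>0 \<alpha> = P \<rho>0 (\<lambda>_. 1)" using Ppoly[OF r0(2)] r0(3) by (metis is_poly_0_const)
    then have "P \<rho>0 \<alpha> = 1" using P1[OF r0(2)] by simp
    moreover have "ip m n v (P \<rho>0) = 0" using v0 by (simp add: ip_zero1)
    ultimately show False using ipv[OF r0(1)] by simp
  qed
  show ?thesis unfolding Let_def v_def[symmetric] using vSk vnz T by blast
qed

end
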